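(* Let $\lambda_0,\lambda_1\in\mathbb{R}$, $a<b$, and $f:[a,b]\to\mathbb{C}$ twice continuously differentiable. Then $$|D_{\lambda_0}f(a)|\le 4\frac{e^{(|\lambda_0|+|\lambda_1|)(b-a)}}{b-a}\max\{|f(a)|,|f(b)|\}+2\max_{t\in[a,b]}|D_{\lambda_1}D_{\lambda_0}f(t)|\,(b-a)\,e^{|\lambda_1|(b-a)}.$$
   Context: For $\lambda\in\mathbb{C}$, $D_\lambda f=f'-\lambda f$ (one-sided derivatives at endpoints). *)

theory Defs
  imports "HOL-Analysis.Analysis"
begin

text \<open>The operator D_lambda g = g' - lambda g, where the derivative g' of g is passed
explicitly (as a function on [a,b] that is the one-sided/two-sided derivative of g
within [a,b]).\<close>
definition Dop :: "complex \<Rightarrow> (real \<Rightarrow> complex) \<Rightarrow> (real \<Rightarrow> complex) \<Rightarrow> real \<Rightarrow> complex" where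
  "Dop lam g g' t = g' t - lam * g t"

end

theory Submission
  imports Defs
begin

theorem mainTheorem19:
  fixes f f' f'' :: "real \<Rightarrow> complex" and a b l0 l1 :: real
  assumes "a < b"
    and "\<And>t. t \<in> {a..b} \<Longrightarrow> (f has_vector_derivative f' t) (at t within {a..b})"
    and "\<And>t. t \<in> {a..b} \<Longrightarrow> (f' has_vector_derivative f'' t) (at t within {a..b})"
    and "continuous_on {a..b} f''"
  shows "norm (Dop (of_real l0) f f' a)
    \<le> 4 * exp ((\<bar>l0\<bar> + \<bar>l1\<bar>) * (b - a)) / (b - a) * max (norm (f a)) (norm (f b))
      + 2 * (SUP t\<in>{a..b}. norm (Dop (of_real l1) (Dop (of_real l0) f f')
                                        (Dop (of_real l0) f' f'') t))
          * (b - a) * exp (\<bar>l1\<bar> * (b - a))"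
proof -
  note df = assms(2) and df' = assms(3)
  define g where "g = (\<lambda>t. f' t - of_real l0 * f t)"
  define g' where "g' = (\<lambda>t. f'' t - of_real l0 * f' t)"
  define h where "h = (\<lambda>t. g' t - of_real l1 * g t)"
  define L where "L = b - a"
  define K where "K = \<bar>l0\<bar> + \<bar>l1\<bar>"
  define M where "M = (SUP t\<in>{a..b}. norm (h t))"
  have L: "L > 0" using assms(1) L_def by simp
  have hD: "Dop (of_real l1) (Dop (of_real l0) f f') (Dop (of_real l0) f' f'') t = h t" for t
    by (simp add: Dop_def h_def g_def g'_def scaleR_conv_of_real)
  have gD: "Dop (of_real l0) f f' a = g a" by (simp add: Dop_def g_def scaleR_conv_of_real)
  have cf: "continuous_on {a..b} f" using continuous_on_vector_derivative df by blast
  have cf': "continuous_on {a..b} f'" using continuous_on_vector_derivative df' by blast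
  have ch: "continuous_on {a..b} h" unfolding h_def g_def g'_def
    by (intro continuous_intros cf cf' assms(4))
  have bdd: "bdd_above ((\<lambda>t. norm (h t)) ` {a..b})"
    by (intro bounded_imp_bdd_above compact_imp_bounded compact_continuous_image continuous_intros ch) auto
  have hM: "norm (h t) \<le> M" if "t \<in> {a..b}" for t
    unfolding M_def using bdd that by (rule cSUP_upper2) simp
  have M0: "0 \<le> M" using hM[of a] assms(1) by (smt (verit) atLeastAtMost_iff norm_ge_zero)
  have dg: "(g has_vector_derivative g' t) (at t within {a..b})" if "t \<in> {a..b}" for t
    unfolding g_def g'_def using df[OF that] df'[OF that]
    by (intro derivative_intros) auto
  define \<phi> where "\<phi> = (\<lambda>t. exp (- l1 * (t - a)) *\<^sub>R g t)"
  have d\<phi>: "(\<phi> has_vector_derivative (exp (- l1 * (t - a)) *\<^sub>R h t)) (at t within {a..b})"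
    if "t \<in> {a..b}" for t
  proof -
    have "(\<phi> has_vector_derivative (exp (- l1 * (t - a)) *\<^sub>R g' t + (exp (- l1 * (t - a)) * (- l1)) *\<^sub>R g t)) (at t within {a..b})"
      unfolding \<phi>_def
      by (intro has_vector_derivative_scaleR dg[OF that] derivative_eq_intros) auto
    moreover have "exp (- l1 * (t - a)) *\<^sub>R g' t + (exp (- l1 * (t - a)) * (- l1)) *\<^sub>R g t
       = exp (- l1 * (t - a)) *\<^sub>R h t"
      by (simp add: h_def algebra_simps scaleR_conv_of_real)
    ultimately show ?thesis by simp
  qed
  define C where "C = M * L * exp (\<bar>l1\<bar> * L)"
  have \<phi>C: "norm (\<phi> s - g a) \<le> C" if s: "s \<in> {a..b}" for s
  proof -
    have "((\<lambda>t. exp (- l1 * (t - a)) *\<^sub>R h t) has_integral (\<phi> s - \<phi> a)) {a..s}"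
    proof (rule fundamental_theorem_of_calculus)
      show "a \<le> s" using s by simp
      fix x assume "x \<in> {a..s}"
      then show "(\<phi> has_vector_derivative exp (- l1 * (x - a)) *\<^sub>R h x) (at x within {a..s})"
        using s by (intro has_vector_derivative_within_subset[OF d\<phi>]) auto
    qed
    moreover have "norm (exp (- l1 * (t - a)) *\<^sub>R h t) \<le> M * exp (\<bar>l1\<bar> * L)" if "t \<in> {a..s}" for t
    proof -
      have "exp (- l1 * (t - a)) \<le> exp (\<bar>l1\<bar> * L)"
      proof -
        have "- l1 * (t - a) \<le> \<bar>l1\<bar> * (t - a)" using that
          by (intro mult_right_mono) auto
        also have "\<dots> \<le> \<bar>l1\<bar> * (b - a)" using that s by (intro mult_left_mono) auto
        finally show ?thesis by (simp add: L_def)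
      qed
      then show ?thesis using hM[of t] that s M0
        by (simp add: mult_mono' mult.commute)
    qed
    ultimately have "norm (\<phi> s - \<phi> a) \<le> M * exp (\<bar>l1\<bar> * L) * (s - a)"
      using M0 s has_integral_bound_real[where S="{}" and B="M * exp (\<bar>l1\<bar> * L)"
          and f="\<lambda>t. exp (- l1 * (t - a)) *\<^sub>R h t" and a=a and b=s]
      by auto
    also have "\<dots> \<le> C" unfolding C_def using s M0 L_def
      by (simp add: mult.assoc mult.left_commute[of "exp _"] mult_left_mono)
    finally show ?thesis by (simp add: \<phi>_def)
  qed
  define w where "w = (\<lambda>t. exp ((l1 - l0) * (t - a)))"
  define \<psi> where "\<psi> = (\<lambda>t. exp (- l0 * (t - a)) *\<^sub>R f t)"
  have d\<psi>: "(\<psi> has_vector_derivative (w t *\<^sub>R \<phi> t)) (at t within {a..b})"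
    if "t \<in> {a..b}" for t
  proof -
    have "(\<psi> has_vector_derivative (exp (- l0 * (t - a)) *\<^sub>R f' t + (exp (- l0 * (t - a)) * (- l0)) *\<^sub>R f t)) (at t within {a..b})"
      unfolding \<psi>_def
      by (intro has_vector_derivative_scaleR df[OF that] derivative_eq_intros) auto
    moreover have "exp (- l0 * (t - a)) *\<^sub>R f' t + (exp (- l0 * (t - a)) * (- l0)) *\<^sub>R f t
       = exp (- l0 * (t - a)) *\<^sub>R g t"
      by (simp add: g_def algebra_simps scaleR_conv_of_real)
    moreover have "w t *\<^sub>R \<phi> t = exp (- l0 * (t - a)) *\<^sub>R g t"
      unfolding w_def \<phi>_def scaleR_scaleR exp_add[symmetric] by (simp add: algebra_simps)
    ultimately show ?thesis by simp
  qed
  have I1: "((\<lambda>t. w t *\<^sub>R \<phi> t) has_integral (\<psi> b - \<psi> a)) {a..b}"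
    using assms(1) d\<psi> by (intro fundamental_theorem_of_calculus) auto
  have cw: "continuous_on {a..b} w" unfolding w_def by (intro continuous_intros)
  define J where "J = integral {a..b} w"
  have Jw: "(w has_integral J) {a..b}" unfolding J_def
    using integrable_continuous_real[OF cw] by (simp add: has_integral_integral)
  have I2: "((\<lambda>t. w t *\<^sub>R g a) has_integral (J *\<^sub>R g a)) {a..b}"
    by (rule has_integral_scaleR_left[OF Jw])
  have I3: "((\<lambda>t. w t *\<^sub>R (\<phi> t - g a)) has_integral (\<psi> b - \<psi> a - J *\<^sub>R g a)) {a..b}"
    using has_integral_diff[OF I1 I2] by (simp add: scaleR_diff_right)
  have I4: "((\<lambda>t. w t * C) has_integral (J * C)) {a..b}"
    by (rule has_integral_mult_left[OF Jw])
  have w0: "w t > 0" for t unfolding w_def by simp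
  have bnd: "norm (\<psi> b - \<psi> a - J *\<^sub>R g a) \<le> J * C"
  proof -
    have "norm (integral {a..b} (\<lambda>t. w t *\<^sub>R (\<phi> t - g a))) \<le> integral {a..b} (\<lambda>t. w t * C)"
    proof (rule integral_norm_bound_integral)
      show "(\<lambda>t. w t *\<^sub>R (\<phi> t - g a)) integrable_on {a..b}" using I3 by blast
      show "(\<lambda>t. w t * C) integrable_on {a..b}" using I4 by blast
      fix t assume "t \<in> {a..b}"
      then show "norm (w t *\<^sub>R (\<phi> t - g a)) \<le> w t * C"
        using \<phi>C[of t] w0[of t] by (simp add: mult_left_mono)
    qed
    then show ?thesis using integral_unique[OF I3] integral_unique[OF I4] by (simp add: J_def)
  qed
  have J0: "J \<ge> 0" using w0 Jw has_integral_nonneg by (metis less_imp_le)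
  define c where "c = (if l0 \<ge> 0 then 1 else exp (l0 * L))"
  have c0: "c > 0" unfolding c_def by simp
  have cw_low: "c * w t \<ge> exp (- K * L)" if "t \<in> {a..b}" for t
  proof (cases "l0 \<ge> 0")
    case True
    have "- K * L \<le> (l1 - l0) * (t - a)"
    proof -
      have "- K * L \<le> - K * (t - a)" using that L_def K_def
        by (intro mult_left_mono_neg) auto
      also have "\<dots> \<le> (l1 - l0) * (t - a)" using that K_def
        by (intro mult_right_mono) auto
      finally show ?thesis .
    qed
    then show ?thesis using True unfolding c_def w_def by simp
  next
    case False
    have "c * w t = exp (l1 * (t - a) + l0 * (b - t))"
      using False unfolding c_def w_def L_def by (simp add: exp_add[symmetric] algebra_simps)
    moreover have "- K * L \<le> l1 * (t - a) + l0 * (b - t)"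
    proof -
      have "- \<bar>l1\<bar> * L \<le> - \<bar>l1\<bar> * (t - a)" using that L_def
        by (intro mult_left_mono_neg) auto
      also have "\<dots> \<le> l1 * (t - a)" using that by (intro mult_right_mono) auto
      finally have 1: "- \<bar>l1\<bar> * L \<le> l1 * (t - a)" .
      have 2: "- \<bar>l0\<bar> * L \<le> l0 * (b - t)" using that False L_def
        by (simp add: mult_left_mono_neg)
      show ?thesis using 1 2 K_def by (simp add: algebra_simps)
    qed
    ultimately show ?thesis by simp
  qed
  have cJ: "c * J \<ge> L * exp (- K * L)"
  proof -
    have 1: "((\<lambda>t. c * w t) has_integral (c * J)) {a..b}" by (rule has_integral_mult_right[OF Jw])
    have 2: "((\<lambda>t. exp (- K * L)) has_integral (L * exp (- K * L))) {a..b}"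
      using has_integral_const_real[of "exp (- K * L)" a b] assms(1) L_def by simp
    show ?thesis by (rule has_integral_le[OF 2 1 cw_low])
  qed
  define mx where "mx = max (norm (f a)) (norm (f b))"
  have mx0: "mx \<ge> 0" unfolding mx_def by (simp add: le_max_iff_disj)
  have \<psi>a: "\<psi> a = f a" by (simp add: \<psi>_def)
  have \<psi>b: "\<psi> b = exp (- l0 * L) *\<^sub>R f b" by (simp add: \<psi>_def L_def)
  have cN: "c * norm (\<psi> b - \<psi> a) \<le> 2 * mx"
  proof -
    have "norm (\<psi> b - \<psi> a) \<le> exp (- l0 * L) * norm (f b) + norm (f a)"
      using norm_triangle_ineq4[of "\<psi> b" "\<psi> a"] \<psi>a \<psi>b by simp
    also have "\<dots> \<le> exp (- l0 * L) * mx + mx" unfolding mx_def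
      by (intro add_mono mult_left_mono) auto
    finally have "c * norm (\<psi> b - \<psi> a) \<le> c * (exp (- l0 * L) * mx + mx)"
      using c0 by (simp add: mult_left_mono)
    also have "\<dots> \<le> 2 * mx"
    proof (cases "l0 \<ge> 0")
      case True
      have "exp (- l0 * L) \<le> 1" using True L by simp
      then show ?thesis using True mx0 c_def by (simp add: mult_left_le_one_le)
    next
      case False
      have "c * (exp (- l0 * L) * mx + mx) = mx + exp (l0 * L) * mx"
        using False c_def by (simp add: algebra_simps exp_add[symmetric])
      moreover have "exp (l0 * L) \<le> 1" using False L by (simp add: mult_nonpos_nonneg)
      ultimately show ?thesis using mx0 by (simp add: mult_left_le_one_le)
    qed
    finally show ?thesis .
  qed
  have main: "c * J * norm (g a) \<le> 2 * mx + c * J * C"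
  proof -
    have "J * norm (g a) = norm (J *\<^sub>R g a)" using J0 by simp
    also have "\<dots> \<le> norm (\<psi> b - \<psi> a) + norm (\<psi> b - \<psi> a - J *\<^sub>R g a)"
      by (metis norm_triangle_ineq4 diff_diff_eq2 diff_self diff_zero norm_minus_commute
          add.commute norm_triangle_sub)
    also have "\<dots> \<le> norm (\<psi> b - \<psi> a) + J * C" using bnd by simp
    finally have "c * (J * norm (g a)) \<le> c * (norm (\<psi> b - \<psi> a) + J * C)"
      using c0 by (simp add: mult_left_mono)
    then show ?thesis using cN by (simp add: algebra_simps)
  qed
  have pos: "L * exp (- K * L) > 0" using L by simp
  have ga: "norm (g a) \<le> 2 * mx / (L * exp (- K * L)) + C"
  proof -
    have cJp: "c * J > 0" using cJ pos by linarith
    have "(norm (g a) - C) * (c * J) \<le> 2 * mx" using main by (simp add: algebra_simps)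
    then have "norm (g a) - C \<le> 2 * mx / (c * J)" using cJp by (simp add: pos_le_divide_eq)
    then have "norm (g a) \<le> 2 * mx / (c * J) + C" by linarith
    also have "2 * mx / (c * J) \<le> 2 * mx / (L * exp (- K * L))"
      using cJ pos mx0 by (intro divide_left_mono) auto
    finally show ?thesis by simp
  qed
  have C0: "C \<ge> 0" unfolding C_def using M0 L by simp
  have e: "2 * mx / (L * exp (- K * L)) = 2 * exp (K * L) / L * mx"
    by (simp add: exp_minus field_simps)
  have "norm (g a) \<le> 4 * exp (K * L) / L * mx + 2 * M * L * exp (\<bar>l1\<bar> * L)"
  proof -
    have "0 \<le> exp (K * L) / L * mx" using L mx0 by simp
    then show ?thesis using ga e C0 unfolding C_def by linarith
  qed
  then show ?thesis
    unfolding gD hD M_def[symmetric] mx_def[symmetric] using L_def K_def by simp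
qed

end
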